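(* Consider the two-sided market model described in the context, and suppose the ISP charges no membership fee to consumers ($c=0$), so that every consumer participates ($x_t=x_0$), and chooses only the CP fee $b$ to maximize its revenue. Then the revenue-maximizing CP fee is $$ b_{opt}=\begin{cases} a, & \text{if } a> \frac{\lambda}{2}\frac{x_0^{2-\gamma}}{\gamma-2},\\[4pt] \frac{\lambda}{\gamma-2}x_0^{2-\gamma}-a, & \text{if } 0\leq a \leq \frac{\lambda}{2}\frac{x_0^{2-\gamma}}{\gamma-2}.\end{cases} $$
   Context: Model (a monopolist ISP between consumers and content providers (CPs)). Fix exponents $\gamma>2$, $\beta>2$. Consumer types $x$ have density $x^{-\gamma}$ on $x\ge x_0:=(\frac{1}{\gamma-1})^{\frac{1}{\gamma-1}}$; CP types $y$ have density $y^{-\beta}$ on $y\ge y_0:=(\frac{1}{\beta-1})^{\frac{1}{\beta-1}}$. Write $X(s)=\int_s^\infty x^{1-\gamma}dx$, $Y(s)=\int_s^\infty y^{1-\beta}dy$, $\bar X=X(x_0)=\frac{x_0^{2-\gamma}}{\gamma-2}$, $\bar Y=Y(y_0)=\frac{y_0^{2-\beta}}{\beta-2}$, $T_0=\bar X\bar Y$. If consumers of types $\ge x_t$ and CPs of types $\ge y_t$ participate ($x_t\ge x_0$, $y_t\ge y_0$), total traffic is $T=\sqrt{T_0X(x_t)Y(y_t)}$ and network speed is $T_0/T$. A participating consumer of type $x$ gets utility $\phi\big(\int_{y_t}^\infty \frac{T_0}{T}x y^{1-\beta}dy\big)-c$, where $\phi$ is a nonnegative concave function and $c\ge 0$ is the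 membership fee; a participating CP of type $y$ gets utility $\lambda\int_{x_t}^\infty\frac{T_0}{T}x^{1-\gamma}y\,dx-by-ay$, where $\lambda>0$ is an exchange rate, $a\ge 0$ is the CP cost parameter and $b$ the CP fee. The ISP's revenue is $\mathcal R=c\int_{x_t}^\infty x^{-\gamma}dx+b\,Y(y_t)$. The ISP selects thresholds and charges the prices at which the threshold types are exactly indifferent (utility $0$); here with $c=0$ this means $x_t=x_0$ and $b=\lambda\int_{x_0}^\infty\frac{T_0}{T}x^{1-\gamma}dx-a$, and the optimal $b$ is the one corresponding to the revenue-maximizing $y_t\ge y_0$. *)

theory Defs
  imports "HOL-Analysis.Analysis"
begin

text \<open>Lower end of the type support: (1/(e-1))^(1/(e-1)) for exponent e
  (x_0 for consumers with e = gamma, y_0 for CPs with e = beta).\<close>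
definition type_min :: "real \<Rightarrow> real" where
  "type_min e = (1 / (e - 1)) powr (1 / (e - 1))"

definition tail_mass :: "real \<Rightarrow> real \<Rightarrow> real" where
  "tail_mass e s = integral {s..} (\<lambda>x. x powr (1 - e))"

definition tail_bar :: "real \<Rightarrow> real" where
  "tail_bar e = tail_mass e (type_min e)"

definition T0 :: "real \<Rightarrow> real \<Rightarrow> real" where
  "T0 \<gamma> \<beta> = tail_bar \<gamma> * tail_bar \<beta>"

definition traffic :: "real \<Rightarrow> real \<Rightarrow> real \<Rightarrow> real \<Rightarrow> real" where
  "traffic \<gamma> \<beta> xt yt = sqrt (T0 \<gamma> \<beta> * tail_mass \<gamma> xt * tail_mass \<beta> yt)"

definition speed :: "real \<Rightarrow> real \<Rightarrow> real \<Rightarrow> real \<Rightarrow> real" where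
  "speed \<gamma> \<beta> xt yt = T0 \<gamma> \<beta> / traffic \<gamma> \<beta> xt yt"

text \<open>CP fee making the threshold CP type y_t exactly indifferent, when all
  consumers participate (x_t = x_0):
  b = lambda * integral_{x_0}^infty (T_0/T) x^(1-gamma) dx - a.\<close>
definition cp_fee :: "real \<Rightarrow> real \<Rightarrow> real \<Rightarrow> real \<Rightarrow> real \<Rightarrow> real" where
  "cp_fee \<gamma> \<beta> lam a yt =
     lam * integral {type_min \<gamma>..}
        (\<lambda>x. speed \<gamma> \<beta> (type_min \<gamma>) yt * x powr (1 - \<gamma>)) - a"

definition isp_revenue :: "real \<Rightarrow> real \<Rightarrow> real \<Rightarrow> real \<Rightarrow> real \<Rightarrow> real \<Rightarrow> real" where
  "isp_revenue \<gamma> \<beta> lam a c yt =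
     c * integral {type_min \<gamma>..} (\<lambda>x. x powr (- \<gamma>))
     + cp_fee \<gamma> \<beta> lam a yt * tail_mass \<beta> yt"

end

theory Submission
  imports Defs
begin

lemma tail_mass_eq:
  assumes "e > 2" "s > 0"
  shows "tail_mass e s = s powr (2 - e) / (e - 2)"
proof -
  have "((\<lambda>x. x powr (1 - e)) has_integral -(s powr ((1-e)+1)) / ((1-e)+1)) {s..}"
    by (rule has_integral_powr_to_inf) (use assms in auto)
  then have "tail_mass e s = -(s powr ((1-e)+1)) / ((1-e)+1)"
    unfolding tail_mass_def by (rule integral_unique)
  also have "\<dots> = s powr (2 - e) / (e - 2)" using assms
    by (simp add: field_simps)
  finally show ?thesis .
qed

lemma type_min_pos: "e > 2 \<Longrightarrow> type_min e > 0"
  unfolding type_min_def by simp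

lemma integral_const_mult:
  "integral S (\<lambda>x. (c::real) * f x) = c * integral S f"
  using integral_cmul[of S c f] by simp

lemma tail_pos: "e > 2 \<Longrightarrow> s > 0 \<Longrightarrow> tail_mass e s > 0"
  by (simp add: tail_mass_eq)

theorem theorem1:
  fixes \<gamma> \<beta> lam a :: real
  assumes "\<gamma> > 2" and "\<beta> > 2" and "lam > 0" and "a \<ge> 0"
  shows "(\<exists>yt \<ge> type_min \<beta>. \<forall>y \<ge> type_min \<beta>.
            isp_revenue \<gamma> \<beta> lam a 0 y \<le> isp_revenue \<gamma> \<beta> lam a 0 yt)
       \<and> (\<forall>yt. yt \<ge> type_min \<beta> \<and>
            (\<forall>y \<ge> type_min \<beta>. isp_revenue \<gamma> \<beta> lam a 0 y \<le> isp_revenue \<gamma> \<beta> lam a 0 yt)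
            \<longrightarrow> cp_fee \<gamma> \<beta> lam a yt =
                (if a > lam / 2 * (type_min \<gamma> powr (2 - \<gamma>) / (\<gamma> - 2))
                 then a
                 else lam / (\<gamma> - 2) * type_min \<gamma> powr (2 - \<gamma>) - a))"
proof -
  define x0 where "x0 = type_min \<gamma>"
  define y0 where "y0 = type_min \<beta>"
  define X where "X = tail_bar \<gamma>"
  define Yb where "Yb = tail_bar \<beta>"
  define w where "w = sqrt Yb"
  define K where "K = lam * X * w"
  have x0p: "x0 > 0" and y0p: "y0 > 0" using assms type_min_pos x0_def y0_def by auto
  have Xeq: "X = x0 powr (2 - \<gamma>) / (\<gamma> - 2)"
    using tail_mass_eq[OF assms(1) x0p] unfolding X_def tail_bar_def x0_def by simp
  have Ybeq: "Yb = y0 powr (2 - \<beta>) / (\<beta> - 2)"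
    using tail_mass_eq[OF assms(2) y0p] unfolding Yb_def tail_bar_def y0_def by simp
  have Xp: "X > 0" using Xeq x0p assms by simp
  have Ybp: "Yb > 0" using Ybeq y0p assms by simp
  have w2: "w^2 = Yb" "w > 0" using Ybp w_def by auto
  have Y_fact: "tail_mass \<beta> y > 0 \<and> tail_mass \<beta> y \<le> Yb" if "y \<ge> y0" for y
  proof -
    have yp: "y > 0" using that y0p by simp
    have "y powr (2 - \<beta>) \<le> y0 powr (2 - \<beta>)"
      by (rule powr_mono2') (use that y0p assms in auto)
    then show ?thesis using tail_mass_eq[OF assms(2) yp] Ybeq assms yp
      by (simp add: divide_right_mono)
  qed
  have key: "cp_fee \<gamma> \<beta> lam a y = K / sqrt (tail_mass \<beta> y) - a \<and>
      isp_revenue \<gamma> \<beta> lam a 0 y = K * sqrt (tail_mass \<beta> y) - a * (sqrt (tail_mass \<beta> y))^2"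
    if "y \<ge> y0" for y
  proof -
    define v where "v = sqrt (tail_mass \<beta> y)"
    have vp: "v > 0" and v2: "v^2 = tail_mass \<beta> y" using Y_fact[OF that] v_def by auto
    have "traffic \<gamma> \<beta> x0 y = sqrt ((X*X) * (Yb * tail_mass \<beta> y))"
      unfolding traffic_def T0_def X_def Yb_def x0_def tail_bar_def by (simp add: ac_simps)
    also have "\<dots> = X * (w * v)" unfolding w_def v_def
      using Xp by (simp add: real_sqrt_mult)
    finally have tr: "traffic \<gamma> \<beta> x0 y = X * (w * v)" .
    have sp: "speed \<gamma> \<beta> x0 y = w / v"
      unfolding speed_def tr using Xp w2 vp
      by (simp add: T0_def X_def[symmetric] Yb_def[symmetric] power2_eq_square field_simps)
    have fee: "cp_fee \<gamma> \<beta> lam a y = K / v - a"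
      unfolding cp_fee_def x0_def[symmetric] sp integral_const_mult
      using vp by (simp add: K_def X_def tail_bar_def x0_def tail_mass_def)
    have "isp_revenue \<gamma> \<beta> lam a 0 y = (K / v - a) * v^2"
      unfolding isp_revenue_def fee v2 by simp
    also have "\<dots> = K * v - a * v^2" using vp by (simp add: power2_eq_square field_simps)
    finally show ?thesis using fee v_def by simp
  qed
  have range: "\<exists>y\<ge>y0. sqrt (tail_mass \<beta> y) = v" if "0 < v" "v \<le> w" for v
  proof -
    define y where "y = ((\<beta> - 2) * v^2) powr (1 / (2 - \<beta>))"
    have yp: "y > 0" using that assms y_def by simp
    have ypow: "y powr (2 - \<beta>) = (\<beta> - 2) * v^2"
      unfolding y_def using that assms by (simp add: powr_powr)
    have tm: "tail_mass \<beta> y = v^2"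
      using tail_mass_eq[OF assms(2) yp] ypow assms by simp
    have "y \<ge> y0"
    proof (rule ccontr)
      assume "\<not> y \<ge> y0"
      then have "y0 powr (2 - \<beta>) < y powr (2 - \<beta>)"
        by (intro powr_less_mono2_neg) (use assms yp in auto)
      moreover have "v^2 \<le> w^2" using that by (intro power_mono) auto
      ultimately show False using ypow Ybeq w2 assms by (simp add: field_simps)
    qed
    then show ?thesis using tm that by auto
  qed
  define thr where "thr = lam / 2 * (x0 powr (2 - \<gamma>) / (\<gamma> - 2))"
  define target where "target = (if a > thr then a else lam / (\<gamma> - 2) * x0 powr (2 - \<gamma>) - a)"
  define vs where "vs = (if a > thr then K / (2*a) else w)"
  have thrX: "thr = lam * X / 2" unfolding thr_def Xeq by simp
  have Kp: "K > 0" using assms Xp w2 K_def by simp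
  have vs_in: "0 < vs \<and> vs \<le> w"
  proof (cases "a > thr")
    case True
    then have "a > 0" using thrX assms Xp mult_pos_pos[of lam X] by linarith
    moreover have "K \<le> 2*a*w" using True thrX w2 mult_right_mono[of "lam*X" "2*a" w] unfolding K_def
      by simp
    ultimately have "K / (2*a) \<le> w" by (simp add: divide_le_eq ac_simps)
    moreover have "K / (2*a) > 0" using Kp \<open>a > 0\<close> by simp
    ultimately show ?thesis using True vs_def by simp
  qed (use vs_def w2 in auto)
  have better: "K * v - a * v^2 < K * vs - a * vs^2" if "0 < v" "v \<le> w" "v \<noteq> vs" for v
  proof (cases "a > thr")
    case True
    then have ap: "a > 0" using thrX assms Xp mult_pos_pos[of lam X] by linarith
    have vs': "vs = K / (2*a)" using True vs_def by simp
    have "(K * vs - a * vs^2) - (K * v - a * v^2) = a * (v - vs)^2"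
      using ap unfolding vs' by (simp add: power2_eq_square field_simps)
    moreover have "a * (v - vs)^2 > 0" using ap that by simp
    ultimately show ?thesis by linarith
  next
    case False
    then have vs': "vs = w" using vs_def by simp
    have lt: "v < w" using that vs' by simp
    have h: "lam * X \<ge> 2 * a" using False thrX by simp
    have "(K * vs - a * vs^2) - (K * v - a * v^2) = (w - v) * (lam * X * w - a * (w + v))"
      unfolding vs' K_def by (simp add: power2_eq_square field_simps)
    moreover have "lam * X * w - a * (w + v) > 0"
    proof (cases "a = 0")
      case True then show ?thesis using Kp K_def by simp
    next
      case False
      then have "a > 0" using assms by simp
      then have "a * (w + v) < a * (2 * w)" using lt by simp
      also have "\<dots> \<le> lam * X * w" using h w2 mult_right_mono[of "2*a" "lam*X" w] by (simp add: ac_simps)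
      finally show ?thesis by simp
    qed
    moreover have "w - v > 0" using lt by simp
    ultimately show ?thesis using mult_pos_pos[of "w - v" "lam * X * w - a * (w + v)"] by linarith
  qed
  have fee_vs: "K / vs - a = target"
  proof (cases "a > thr")
    case True
    then have ap: "a > 0" using thrX assms Xp mult_pos_pos[of lam X] by linarith
    show ?thesis using True ap Kp unfolding vs_def target_def by simp
  next
    case False
    have "K / vs = lam * X" using False w2 unfolding vs_def K_def by simp
    then show ?thesis using False unfolding target_def Xeq by simp
  qed
  obtain ys where ys: "ys \<ge> y0" "sqrt (tail_mass \<beta> ys) = vs" using range vs_in by blast
  have part1: "\<forall>y\<ge>y0. isp_revenue \<gamma> \<beta> lam a 0 y \<le> isp_revenue \<gamma> \<beta> lam a 0 ys"
  proof (intro allI impI)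
    fix y assume y: "y \<ge> y0"
    define v where "v = sqrt (tail_mass \<beta> y)"
    have v: "0 < v" "v \<le> w" using Y_fact[OF y] v_def w_def by auto
    have "K * v - a * v^2 \<le> K * vs - a * vs^2" using better[OF v] by fastforce
    then show "isp_revenue \<gamma> \<beta> lam a 0 y \<le> isp_revenue \<gamma> \<beta> lam a 0 ys"
      using key[OF y] key[OF ys(1)] ys(2) v_def by simp
  qed
  have part2: "cp_fee \<gamma> \<beta> lam a yt = target"
    if yt: "yt \<ge> y0" and mx: "\<forall>y\<ge>y0. isp_revenue \<gamma> \<beta> lam a 0 y \<le> isp_revenue \<gamma> \<beta> lam a 0 yt" for yt
  proof -
    define v where "v = sqrt (tail_mass \<beta> yt)"
    have v: "0 < v" "v \<le> w" using Y_fact[OF yt] v_def w_def by auto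
    have "isp_revenue \<gamma> \<beta> lam a 0 ys \<le> isp_revenue \<gamma> \<beta> lam a 0 yt" using mx ys(1) by simp
    then have "K * vs - a * vs^2 \<le> K * v - a * v^2"
      using key[OF yt] key[OF ys(1)] ys(2) v_def by simp
    then have "v = vs" using better[OF v] by force
    then show ?thesis using key[OF yt] v_def fee_vs by simp
  qed
  show ?thesis
    using part1 part2 ys(1) unfolding y0_def target_def thr_def x0_def by blast
qed

end
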